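(* Let $S\subseteq\mathbb{R}^d$ be a set and $K>0$ such that $\frac{\|p_1-p_2\|}{\|q_1-q_2\|}\le K$ for all $p_1,p_2,q_1,q_2\in S$ with $q_1\ne q_2$. If $S$ is $(p,j,\alpha)$-flat for some $p\in S$, then $S$ is $(q,j,20(K\alpha)^{1/2})$-flat for every $q\in S$.
   Context: A $j$-plane is an affine subspace of dimension $j$. The angle between a vector $v$ and a plane $\Lambda$ is the infimum of the angles between $v$ and vectors $w\in\Lambda-\Lambda$. A set $S$ is $(p,j,\alpha)$-flat (for $p\in S$) if there exists a $j$-plane $\Lambda_p$ such that every vector $p-q$, $q\in S$, makes angle at most $\alpha$ with $\Lambda_p$. *)

theory Defs
  imports "HOL-Analysis.Analysis"
begin

definition vec_angle :: "'a::euclidean_space \<Rightarrow> 'a \<Rightarrow> real" where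
  "vec_angle v w = (if v = 0 \<or> w = 0 then pi / 2
                    else arccos ((v \<bullet> w) / (norm v * norm w)))"

definition is_jplane :: "nat \<Rightarrow> 'a::euclidean_space set \<Rightarrow> bool" where
  "is_jplane j L \<longleftrightarrow> affine L \<and> aff_dim L = int j"

definition plane_angle :: "'a::euclidean_space \<Rightarrow> 'a set \<Rightarrow> real" where
  "plane_angle v L = (if v = 0 then 0
     else (INF w \<in> {x - y | x y. x \<in> L \<and> y \<in> L}. vec_angle v w))"

definition flat_at :: "'a::euclidean_space set \<Rightarrow> 'a \<Rightarrow> nat \<Rightarrow> real \<Rightarrow> bool" where
  "flat_at S p j \<alpha> \<longleftrightarrow>
     (\<exists>L. is_jplane j L \<and> (\<forall>q\<in>S. plane_angle (p - q) L \<le> \<alpha>))"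

end

theory Submission
  imports Defs
begin

lemma cs_bounds:
  fixes v w :: "'a::euclidean_space"
  assumes "v \<noteq> 0" "w \<noteq> 0"
  shows "-1 \<le> (v \<bullet> w) / (norm v * norm w) \<and> (v \<bullet> w) / (norm v * norm w) \<le> 1"
proof -
  have p: "norm v * norm w > 0" using assms by simp
  have "\<bar>v \<bullet> w\<bar> \<le> norm v * norm w" by (rule Cauchy_Schwarz_ineq2)
  then show ?thesis using p by (auto simp: divide_simps abs_le_iff)
qed

lemma vec_angle_nonneg: "0 \<le> vec_angle v w"
  using cs_bounds[of v w] arccos_lbound by (auto simp: vec_angle_def)

lemma diffs_subspace:
  assumes "affine L" "a \<in> L"
  shows "{x - y | x y. x \<in> L \<and> y \<in> L} = (\<lambda>x. x - a) ` L"
proof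
  show "{x - y | x y. x \<in> L \<and> y \<in> L} \<subseteq> (\<lambda>x. x - a) ` L"
  proof
    fix u assume "u \<in> {x - y | x y. x \<in> L \<and> y \<in> L}"
    then obtain x y where xy: "x \<in> L" "y \<in> L" "u = x - y" by blast
    have "a + 1 *\<^sub>R (x - y) \<in> L" using mem_affine_3_minus[OF assms(1) assms(2) xy(1) xy(2)] .
    moreover have "u = (a + 1 *\<^sub>R (x - y)) - a" using xy by simp
    ultimately show "u \<in> (\<lambda>x. x - a) ` L" by blast
  qed
  show "(\<lambda>x. x - a) ` L \<subseteq> {x - y | x y. x \<in> L \<and> y \<in> L}" using assms by blast
qed

lemma D_subspace:
  assumes "affine L" "L \<noteq> {}"
  shows "subspace {x - y | x y. x \<in> L \<and> y \<in> L}"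
proof -
  obtain a where a: "a \<in> L" using assms by blast
  then have "{x - y | x y. x \<in> L \<and> y \<in> L} = (\<lambda>x. x - a) ` L" by (rule diffs_subspace[OF assms(1)])
  then show ?thesis using affine_diffs_subspace_subtract[OF assms(1) a] by simp
qed

lemma norm_decomp:
  fixes y z :: "'a::euclidean_space"
  assumes "z \<bullet> y = 0"
  shows "norm (y + z) ^ 2 = norm y ^ 2 + norm z ^ 2"
proof -
  have "y \<bullet> z = 0" using assms by (simp add: inner_commute)
  then show ?thesis using assms by (simp add: power2_norm_eq_inner inner_add_left inner_add_right)
qed

lemma plane_angle_le_pi2:
  assumes "L \<noteq> {}"
  shows "plane_angle v L \<le> pi / 2"
proof (cases "v = 0")
  case True then show ?thesis by (simp add: plane_angle_def)
next
  case False
  obtain a where a: "a \<in> L" using assms by blast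
  have z0: "0 \<in> {x - y | x y. x \<in> L \<and> y \<in> L}" using a by force
  have bb: "bdd_below ((\<lambda>w. vec_angle v w) ` {x - y | x y. x \<in> L \<and> y \<in> L})"
    using vec_angle_nonneg by (intro bdd_belowI[where m=0]) auto
  have "(INF w \<in> {x - y | x y. x \<in> L \<and> y \<in> L}. vec_angle v w) \<le> vec_angle v 0"
    by (rule cINF_lower[OF bb z0])
  then show ?thesis using False by (simp add: plane_angle_def vec_angle_def)
qed

lemma vec_angle_lower:
  fixes v y z w :: "'a::euclidean_space"
  assumes orth: "\<forall>u\<in>D. z \<bullet> u = 0" and "y \<in> D" "w \<in> D" "v = y + z" "v \<noteq> 0"
  shows "arccos (norm y / norm v) \<le> vec_angle v w"
proof -
  have zy: "z \<bullet> y = 0" using orth \<open>y \<in> D\<close> by blast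
  have "norm v ^ 2 = norm y ^ 2 + norm z ^ 2" unfolding \<open>v = y + z\<close> by (rule norm_decomp[OF zy])
  then have "norm y ^ 2 \<le> norm v ^ 2" by simp
  then have yv: "norm y \<le> norm v" by (rule power2_le_imp_le) simp
  have nv: "norm v > 0" using assms by simp
  have r01: "0 \<le> norm y / norm v" "norm y / norm v \<le> 1" using yv nv by auto
  show ?thesis
  proof (cases "w = 0")
    case True
    then show ?thesis using arccos_le_pi2[OF r01] by (simp add: vec_angle_def)
  next
    case False
    have "z \<bullet> w = 0" using orth \<open>w \<in> D\<close> by blast
    then have "v \<bullet> w = y \<bullet> w" unfolding \<open>v = y + z\<close> by (simp add: inner_add_left)
    also have "\<dots> \<le> norm y * norm w" by (rule norm_cauchy_schwarz)
    finally have "v \<bullet> w \<le> norm y * norm w" .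
    then have "(v \<bullet> w) / (norm v * norm w) \<le> (norm y * norm w) / (norm v * norm w)"
      using nv by (intro divide_right_mono) auto
    also have "\<dots> = norm y / norm v" using False by simp
    finally have le: "(v \<bullet> w) / (norm v * norm w) \<le> norm y / norm v" .
    have "arccos (norm y / norm v) \<le> arccos ((v \<bullet> w) / (norm v * norm w))"
      using cs_bounds[OF \<open>v \<noteq> 0\<close> False] le r01 by (intro arccos_le_arccos) auto
    then show ?thesis using False \<open>v \<noteq> 0\<close> by (simp add: vec_angle_def)
  qed
qed

lemma z_bound:
  fixes v y z :: "'a::euclidean_space"
  assumes L: "affine L" "L \<noteq> {}"
    and orth: "\<forall>u\<in>{x - y | x y. x \<in> L \<and> y \<in> L}. z \<bullet> u = 0"
    and yD: "y \<in> {x - y | x y. x \<in> L \<and> y \<in> L}" and v: "v = y + z"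
    and pa: "plane_angle v L \<le> \<alpha>" and al: "\<alpha> \<le> pi / 2"
  shows "norm z \<le> sin \<alpha> * norm v"
proof (cases "v = 0")
  case True
  have sub: "subspace {x - y | x y. x \<in> L \<and> y \<in> L}" using D_subspace[OF L] .
  have "z = - y" using True v by (simp add: eq_neg_iff_add_eq_0 add.commute)
  then have "z \<in> {x - y | x y. x \<in> L \<and> y \<in> L}" using subspace_neg[OF sub yD] by simp
  then have "z \<bullet> z = 0" using orth by blast
  then show ?thesis using True by simp
next
  case False
  let ?D = "{x - y | x y. x \<in> L \<and> y \<in> L}"
  let ?r = "norm y / norm v"
  have zy: "z \<bullet> y = 0" using orth yD by blast
  have nn: "norm v ^ 2 = norm y ^ 2 + norm z ^ 2" unfolding v by (rule norm_decomp[OF zy])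
  then have nv2: "norm z ^ 2 = norm v ^ 2 - norm y ^ 2" by simp
  have "norm y ^ 2 \<le> norm v ^ 2" using nn zero_le_power2[of "norm z"] by linarith
  then have yv: "norm y \<le> norm v" by (rule power2_le_imp_le) simp
  have nv: "norm v > 0" using False by simp
  have r01: "0 \<le> ?r" "?r \<le> 1" using yv nv by auto
  have "?D \<noteq> {}" using L by blast
  then have "arccos ?r \<le> (INF w \<in> ?D. vec_angle v w)"
    using vec_angle_lower[OF orth yD _ v False] by (intro cINF_greatest) auto
  then have ar: "arccos ?r \<le> \<alpha>" using pa False by (simp add: plane_angle_def)
  have a0: "0 \<le> \<alpha>" using ar arccos_lbound[of ?r] r01 by linarith
  have m1: "-1 \<le> ?r" using r01 by linarith
  have ab: "0 \<le> arccos ?r" using arccos_bounded[OF m1 r01(2)] by simp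
  have "cos \<alpha> \<le> cos (arccos ?r)"
    by (rule cos_monotone_0_pi_le[OF ab ar]) (use al pi_gt_zero in linarith)
  then have ca: "cos \<alpha> \<le> ?r" using cos_arccos[of ?r] r01 by simp
  have ca0: "0 \<le> cos \<alpha>" using a0 al by (intro cos_ge_zero) auto
  have "cos \<alpha> * norm v \<le> ?r * norm v" using ca nv by (intro mult_right_mono) auto
  also have "?r * norm v = norm y" using nv by simp
  finally have "cos \<alpha> * norm v \<le> norm y" .
  then have "(cos \<alpha> * norm v) ^ 2 \<le> norm y ^ 2" using ca0 nv by (intro power_mono) auto
  moreover have "(cos \<alpha> * norm v) ^ 2 = cos \<alpha> ^ 2 * norm v ^ 2" by (rule power_mult_distrib)
  moreover have "(1 - cos \<alpha> ^ 2) * norm v ^ 2 = norm v ^ 2 - cos \<alpha> ^ 2 * norm v ^ 2" by (simp add: left_diff_distrib)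
  ultimately have "norm z ^ 2 \<le> (1 - cos \<alpha> ^ 2) * norm v ^ 2" using nv2 by linarith
  also have "\<dots> = (sin \<alpha> * norm v) ^ 2" by (simp add: sin_squared_eq power_mult_distrib)
  finally have "norm z ^ 2 \<le> (sin \<alpha> * norm v) ^ 2" .
  moreover have "0 \<le> sin \<alpha> * norm v" using a0 al by (intro mult_nonneg_nonneg sin_ge_zero) auto
  ultimately show ?thesis by (rule power2_le_imp_le)
qed

lemma plane_angle_upper:
  fixes v y z :: "'a::euclidean_space"
  assumes L: "affine L" "L \<noteq> {}"
    and orth: "\<forall>u\<in>{x - y | x y. x \<in> L \<and> y \<in> L}. z \<bullet> u = 0"
    and yD: "y \<in> {x - y | x y. x \<in> L \<and> y \<in> L}" and v: "v = y + z"
    and b0: "0 \<le> \<beta>" and b1: "\<beta> < pi / 2"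
    and zb: "norm z \<le> sin \<beta> * norm v"
  shows "plane_angle v L \<le> \<beta>"
proof (cases "v = 0")
  case True then show ?thesis using b0 by (simp add: plane_angle_def)
next
  case False
  let ?D = "{x - y | x y. x \<in> L \<and> y \<in> L}"
  have zy: "z \<bullet> y = 0" using orth yD by blast
  have nn: "norm v ^ 2 = norm y ^ 2 + norm z ^ 2" unfolding v by (rule norm_decomp[OF zy])
  then have nv2: "norm y ^ 2 = norm v ^ 2 - norm z ^ 2" by simp
  have nv: "norm v > 0" using False by simp
  have sb: "0 \<le> sin \<beta>" using b0 b1 by (intro sin_ge_zero) auto
  have cb: "0 < cos \<beta>" using b0 b1 by (intro cos_gt_zero_pi) auto
  have "norm z ^ 2 \<le> (sin \<beta> * norm v) ^ 2" using zb by (intro power_mono) auto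
  then have "norm y ^ 2 \<ge> (1 - sin \<beta> ^ 2) * norm v ^ 2" using nv2 by (simp add: algebra_simps power_mult_distrib)
  also have "(1 - sin \<beta> ^ 2) * norm v ^ 2 = (cos \<beta> * norm v) ^ 2" by (simp add: cos_squared_eq power_mult_distrib)
  finally have "(cos \<beta> * norm v) ^ 2 \<le> norm y ^ 2" .
  then have cy: "cos \<beta> * norm v \<le> norm y" by (rule power2_le_imp_le) simp
  have "0 < cos \<beta> * norm v" using cb nv by simp
  then have y0: "y \<noteq> 0" using cy by auto
  have "norm y ^ 2 \<le> norm v ^ 2" using nn zero_le_power2[of "norm z"] by linarith
  then have "norm y \<le> norm v" by (rule power2_le_imp_le) simp
  then have r1: "norm y / norm v \<le> 1" using nv by simp
  have cr: "cos \<beta> \<le> norm y / norm v" using cy nv by (simp add: divide_simps)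
  have "v \<bullet> y = y \<bullet> y" using zy unfolding v by (simp add: inner_add_left)
  then have "(v \<bullet> y) / (norm v * norm y) = norm y / norm v"
    using y0 nv by (simp add: divide_simps power2_norm_eq_inner[symmetric] power2_eq_square)
  then have "vec_angle v y = arccos (norm y / norm v)" using y0 False by (simp add: vec_angle_def)
  also have "\<dots> \<le> arccos (cos \<beta>)" using cr r1 cb by (intro arccos_le_arccos) auto
  also have "\<dots> = \<beta>" using b0 b1 by (intro arccos_cos) auto
  finally have va: "vec_angle v y \<le> \<beta>" .
  have "bdd_below ((\<lambda>w. vec_angle v w) ` ?D)"
    using vec_angle_nonneg by (intro bdd_belowI[where m=0]) auto
  then have "(INF w \<in> ?D. vec_angle v w) \<le> vec_angle v y" using yD by (rule cINF_lower2) simp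
  then show ?thesis using va False by (simp add: plane_angle_def)
qed

lemma sin_lower: "0 \<le> (x::real) \<Longrightarrow> x - x ^ 3 / 6 \<le> sin x"
proof -
  assume "0 \<le> x"
  have "\<bar>sin x - (\<Sum>m<3. sin_coeff m * x ^ m)\<bar> \<le> inverse (fact 3) * \<bar>x\<bar> ^ 3"
    by (rule Maclaurin_sin_bound)
  moreover have "(\<Sum>m<3. sin_coeff m * x ^ m) = x"
    by (simp add: sin_coeff_def numeral_3_eq_3 lessThan_Suc)
  ultimately have h: "\<bar>sin x - x\<bar> \<le> x ^ 3 / 6" using \<open>0 \<le> x\<close> by (simp add: fact_numeral)
  then show ?thesis using abs_le_iff[of "sin x - x"] by linarith
qed

lemma h_dec: fixes y1 y2 z1 z2 p q r :: "'a::real_vector"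
  assumes "p - r = y1 + z1" "p - q = y2 + z2" shows "q - r = (y1 - y2) + (z1 - z2)"
proof -
  have "q - r = (p - r) - (p - q)" by simp
  then show ?thesis using assms by simp
qed

lemma h_sq: fixes s :: real assumes "0 \<le> s" "s < 1" shows "s^2 \<le> s"
  using assms by (simp add: power2_eq_square mult_left_le)

lemma h_sin: fixes b :: real assumes "0 \<le> b" "b < 2" shows "b / 3 \<le> sin b"
proof -
  have "b * b \<le> 2 * 2" using assms by (intro mult_mono) auto
  then have "b^2 \<le> 4" by (simp add: power2_eq_square)
  have "b^3 = b * b^2" by (simp add: power3_eq_cube power2_eq_square)
  also have "\<dots> \<le> b * 4" using assms \<open>b^2 \<le> 4\<close> by (intro mult_left_mono) auto
  finally have "b^3 / 6 \<le> 2 * b / 3" by simp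
  then show ?thesis using sin_lower[OF assms(1)] by linarith
qed

theorem lemma7:
  fixes S :: "'a::euclidean_space set" and K \<alpha> :: real and p :: 'a and j :: nat
  assumes "K > 0"
    and "\<And>p1 p2 q1 q2. p1 \<in> S \<Longrightarrow> p2 \<in> S \<Longrightarrow> q1 \<in> S \<Longrightarrow> q2 \<in> S \<Longrightarrow> q1 \<noteq> q2
           \<Longrightarrow> norm (p1 - p2) / norm (q1 - q2) \<le> K"
    and "p \<in> S"
    and "flat_at S p j \<alpha>"
  shows "\<forall>q\<in>S. flat_at S q j (20 * sqrt (K * \<alpha>))"
proof
  fix q assume qS: "q \<in> S"
  let ?\<beta> = "20 * sqrt (K * \<alpha>)"
  obtain L where jp: "is_jplane j L" and fl: "\<And>r. r \<in> S \<Longrightarrow> plane_angle (p - r) L \<le> \<alpha>"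
    using assms(4) unfolding flat_at_def by blast
  have aL: "affine L" using jp by (simp add: is_jplane_def)
  have neL: "L \<noteq> {}" using jp by (auto simp: is_jplane_def)
  have sub: "subspace ({x - y | x y. x \<in> L \<and> y \<in> L})" by (rule D_subspace[OF aL neL])
  have spanD: "span ({x - y | x y. x \<in> L \<and> y \<in> L}) = {x - y | x y. x \<in> L \<and> y \<in> L}" using sub by (simp add: span_eq_iff)
  have a0: "0 \<le> \<alpha>" using fl[OF assms(3)] by (simp add: plane_angle_def)
  have b0: "0 \<le> ?\<beta>" using a0 assms(1) by simp
  have decomp: "\<exists>y z. y \<in> {x - y | x y. x \<in> L \<and> y \<in> L} \<and> (\<forall>u\<in>{x - y | x y. x \<in> L \<and> y \<in> L}. z \<bullet> u = 0) \<and> x = y + z" for x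
  proof -
    define D where "D = {x - y | x y. x \<in> L \<and> y \<in> L}"
    obtain y z where "y \<in> span D" "\<And>w. w \<in> span D \<Longrightarrow> orthogonal z w" "x = y + z"
      using orthogonal_subspace_decomp_exists[of D x] by blast
    then have "y \<in> D \<and> (\<forall>u\<in>D. z \<bullet> u = 0) \<and> x = y + z"
      using spanD unfolding D_def[symmetric] by (auto simp: orthogonal_def)
    then show ?thesis unfolding D_def by blast
  qed
  have "plane_angle (q - r) L \<le> ?\<beta>" if rS: "r \<in> S" for r
  proof (cases "pi / 2 \<le> ?\<beta>")
    case True
    then show ?thesis using plane_angle_le_pi2[OF neL, of "q - r"] by linarith
  next
    case False
    then have bl: "?\<beta> < pi / 2" by simp
    show ?thesis
    proof (cases "q = r")
      case True then show ?thesis using b0 by (simp add: plane_angle_def)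
    next
      case qr: False
      have nqr: "norm (q - r) > 0" using qr by simp
      have "norm (q - r) / norm (q - r) \<le> K" using assms(2)[OF qS rS qS rS qr] .
      then have K1: "1 \<le> K" using nqr by simp
      have "sqrt (K * \<alpha>) < pi / 40" using bl by simp
      also have "\<dots> < 1" using pi_less_4 by simp
      finally have s1: "sqrt (K * \<alpha>) < 1" .
      have Ka0: "0 \<le> K * \<alpha>" using a0 K1 by simp
      have Kas: "K * \<alpha> = sqrt (K * \<alpha>) ^ 2" using Ka0 by simp
      have "1 * \<alpha> \<le> K * \<alpha>" using K1 a0 by (rule mult_right_mono)
      then have "\<alpha> \<le> K * \<alpha>" by simp
      also have "\<dots> \<le> sqrt (K * \<alpha>)" using h_sq[OF real_sqrt_ge_zero[OF Ka0] s1] Kas by simp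
      also have "\<dots> \<le> pi / 2" using s1 pi_gt3 by linarith
      finally have al: "\<alpha> \<le> pi / 2" .
      obtain y1 z1 where d1: "y1 \<in> {x - y | x y. x \<in> L \<and> y \<in> L}" "\<forall>u\<in>{x - y | x y. x \<in> L \<and> y \<in> L}. z1 \<bullet> u = 0" "p - r = y1 + z1"
        using decomp by blast
      obtain y2 z2 where d2: "y2 \<in> {x - y | x y. x \<in> L \<and> y \<in> L}" "\<forall>u\<in>{x - y | x y. x \<in> L \<and> y \<in> L}. z2 \<bullet> u = 0" "p - q = y2 + z2"
        using decomp by blast
      have z1b: "norm z1 \<le> sin \<alpha> * norm (p - r)"
        by (rule z_bound[OF aL neL d1(2) d1(1) d1(3) fl[OF rS] al])
      have z2b: "norm z2 \<le> sin \<alpha> * norm (p - q)"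
        by (rule z_bound[OF aL neL d2(2) d2(1) d2(3) fl[OF qS] al])
      have e1: "norm (p - r) \<le> K * norm (q - r)"
        using assms(2)[OF assms(3) rS qS rS qr] nqr by (simp add: divide_simps)
      have e2: "norm (p - q) \<le> K * norm (q - r)"
        using assms(2)[OF assms(3) qS qS rS qr] nqr by (simp add: divide_simps)
      have sa0: "0 \<le> sin \<alpha>" using a0 al by (intro sin_ge_zero) auto
      have sa: "sin \<alpha> \<le> \<alpha>" using a0 by (rule sin_x_le_x)
      have yD: "y1 - y2 \<in> {x - y | x y. x \<in> L \<and> y \<in> L}" using subspace_diff[OF sub d1(1) d2(1)] .
      have orth: "\<forall>u\<in>{x - y | x y. x \<in> L \<and> y \<in> L}. (z1 - z2) \<bullet> u = 0" using d1(2) d2(2) by (simp add: inner_diff_left)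
      have qrdec: "q - r = (y1 - y2) + (z1 - z2)" using d1(3) d2(3)
        by (rule h_dec)
      have "norm (z1 - z2) \<le> norm z1 + norm z2" by (rule norm_triangle_ineq4)
      also have "\<dots> \<le> sin \<alpha> * norm (p - r) + sin \<alpha> * norm (p - q)" using z1b z2b by simp
      also have "\<dots> \<le> sin \<alpha> * (K * norm (q - r)) + sin \<alpha> * (K * norm (q - r))"
        using e1 e2 sa0 by (intro add_mono mult_left_mono) auto
      also have "\<dots> = (2 * K * sin \<alpha>) * norm (q - r)" by simp
      also have "\<dots> \<le> (2 * K * \<alpha>) * norm (q - r)"
        using sa K1 nqr by (intro mult_right_mono) auto
      also have "\<dots> \<le> sin ?\<beta> * norm (q - r)"
      proof (rule mult_right_mono)
        let ?s = "sqrt (K * \<alpha>)"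
        have s0: "0 \<le> ?s" using Ka0 by simp
        have "?\<beta> < 2" using bl pi_less_4 by linarith
        then have "?\<beta> / 3 \<le> sin ?\<beta>" using h_sin[OF b0] by blast
        moreover have "2 * K * \<alpha> \<le> ?\<beta> / 3" using h_sq[OF s0 s1] Kas s0 by simp
        ultimately show "2 * K * \<alpha> \<le> sin ?\<beta>" by linarith
      qed (use nqr in auto)
      finally have zb: "norm (z1 - z2) \<le> sin ?\<beta> * norm (q - r)" .
      show ?thesis by (rule plane_angle_upper[OF aL neL orth yD qrdec b0 bl zb])
    qed
  qed
  then show "flat_at S q j ?\<beta>" unfolding flat_at_def using jp by blast
qed

end
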